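(* For every $N\ge1$ and every $\alpha\in\mathbb{S}_m$, $w^{St}_{\mathfrak{so}(N)}(\alpha)=\sum_{s:[m]\to\{1,-1\}}\operatorname{sign}(s)\,N^{f(\alpha_s)-1}$, the sum running over all $2^m$ states $s$ of $\alpha$.
   Context: For $1\le i\le N$, $\bar i=N+1-i$, $F_{ij}=E_{ij}-E_{\bar j\bar i}$ ($E_{ij}$ matrix units), spanning $\mathfrak{so}(N)$; $w_{\mathfrak{so}(N)}(\alpha)=\sum_{i_1,\dots,i_m=1}^N F_{i_1i_{\alpha(1)}}\cdots F_{i_mi_{\alpha(m)}}\in U(\mathfrak{so}(N))$. $w^{St}_{\mathfrak{so}(N)}(\alpha)=\frac1N\operatorname{Tr}\rho(w_{\mathfrak{so}(N)}(\alpha))$, where $\rho:U(\mathfrak{so}(N))\to\mathrm{Mat}_N(\mathbb{C})$ extends the standard (matrix) representation. A state of $\alpha\in\mathbb{S}_m$ is a map $s:[m]\to\{1,-1\}$; $\operatorname{sign}(s)=(-1)^{\#s^{-1}(-1)}$. The number $f(\alpha_s)$ is defined as the number of connected components of the following graph $G$ in which every vertex has degree 2: vertices $l^-,l^+$ for $l\in[m]$; "loop" edges $l^+\!-\!(l+1)^-$ for $1\le l<m$ and $m^+\!-\!1^-$; and for each $l\in[m]$ an "arrow" edge joining the tail point of $l$ with the head point of $\alpha(l)$, where for a leg $l$ with $s(l)=1$ the head point is $l^-$ and the tail point is $l^+$, and for $s(l)=-1$ the head point is $l^+$ and the tail point is $l^-$. (This is the number of boundary components of the possibly non-orientable hypermap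 surface of $\alpha$ in which hyperedge attachments at legs of state $-1$ are half-twisted.) *)

theory Defs
  imports Complex_Main "HOL-Library.FuncSet" "HOL-Combinatorics.Permutations"
begin

text \<open>N x N matrices are functions nat => nat => real, indexed by 1..N.\<close>

definition bar :: "nat \<Rightarrow> nat \<Rightarrow> nat" where
  "bar N i = N + 1 - i"

definition matE :: "nat \<Rightarrow> nat \<Rightarrow> nat \<Rightarrow> nat \<Rightarrow> real" where
  "matE i j = (\<lambda>a b. if a = i \<and> b = j then 1 else 0)"

text \<open>Image of F_ij = E_ij - E_{bar j, bar i} under the standard representation.\<close>
definition matF :: "nat \<Rightarrow> nat \<Rightarrow> nat \<Rightarrow> nat \<Rightarrow> nat \<Rightarrow> real" where
  "matF N i j = (\<lambda>a b. matE i j a b - matE (bar N j) (bar N i) a b)"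

definition matmul :: "nat \<Rightarrow> (nat \<Rightarrow> nat \<Rightarrow> real) \<Rightarrow> (nat \<Rightarrow> nat \<Rightarrow> real) \<Rightarrow> (nat \<Rightarrow> nat \<Rightarrow> real)" where
  "matmul N A B = (\<lambda>a b. \<Sum>c = 1..N. A a c * B c b)"

definition matid :: "nat \<Rightarrow> nat \<Rightarrow> real" where
  "matid = (\<lambda>a b. if a = b then 1 else 0)"

definition matprod_list :: "nat \<Rightarrow> (nat \<Rightarrow> nat \<Rightarrow> real) list \<Rightarrow> (nat \<Rightarrow> nat \<Rightarrow> real)" where
  "matprod_list N Ms = foldr (matmul N) Ms matid"

definition mtrace :: "nat \<Rightarrow> (nat \<Rightarrow> nat \<Rightarrow> real) \<Rightarrow> real" where
  "mtrace N A = (\<Sum>a = 1..N. A a a)"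

definition rho_w_so :: "nat \<Rightarrow> nat \<Rightarrow> (nat \<Rightarrow> nat) \<Rightarrow> (nat \<Rightarrow> nat \<Rightarrow> real)" where
  "rho_w_so N m \<alpha> = (\<lambda>a b. \<Sum>i \<in> Pi\<^sub>E {1..m} (\<lambda>_. {1..N}).
       matprod_list N (map (\<lambda>l. matF N (i l) (i (\<alpha> l))) [1..<m+1]) a b)"

definition wSt_so :: "nat \<Rightarrow> nat \<Rightarrow> (nat \<Rightarrow> nat) \<Rightarrow> real" where
  "wSt_so N m \<alpha> = (1 / real N) * mtrace N (rho_w_so N m \<alpha>)"

definition states :: "nat \<Rightarrow> (nat \<Rightarrow> int) set" where
  "states m = Pi\<^sub>E {1..m} (\<lambda>_. {1, -1})"

definition state_sign :: "nat \<Rightarrow> (nat \<Rightarrow> int) \<Rightarrow> int" where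
  "state_sign m s = (-1) ^ card {l \<in> {1..m}. s l = -1}"

text \<open>Vertex (l, True) is l^+, (l, False) is l^-.\<close>
definition gverts :: "nat \<Rightarrow> (nat \<times> bool) set" where
  "gverts m = {1..m} \<times> UNIV"

definition head_pt :: "(nat \<Rightarrow> int) \<Rightarrow> nat \<Rightarrow> nat \<times> bool" where
  "head_pt s l = (if s l = 1 then (l, False) else (l, True))"

definition tail_pt :: "(nat \<Rightarrow> int) \<Rightarrow> nat \<Rightarrow> nat \<times> bool" where
  "tail_pt s l = (if s l = 1 then (l, True) else (l, False))"

definition gedges :: "nat \<Rightarrow> (nat \<Rightarrow> nat) \<Rightarrow> (nat \<Rightarrow> int) \<Rightarrow> ((nat \<times> bool) \<times> (nat \<times> bool)) set" where
  "gedges m \<alpha> s =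
     {((l, True), (l + 1, False)) | l. 1 \<le> l \<and> l < m}
     \<union> {((m, True), (1, False))}
     \<union> {(tail_pt s l, head_pt s (\<alpha> l)) | l. l \<in> {1..m}}"

definition f_state :: "nat \<Rightarrow> (nat \<Rightarrow> nat) \<Rightarrow> (nat \<Rightarrow> int) \<Rightarrow> nat" where
  "f_state m \<alpha> s = card (gverts m // ((gedges m \<alpha> s \<union> (gedges m \<alpha> s)\<inverse>)\<^sup>*))"

end

theory Submission
  imports Defs
begin


lemma RL:
  assumes "j \<notin> S" "finite S" "finite A"
  shows "(\<Sum>d\<in>A. \<Sum>c\<in>PiE S (\<lambda>_. A). g (c(j:=d))) = (\<Sum>c\<in>PiE (insert j S) (\<lambda>_. A). g c)"
proof -
  have "(\<Sum>c\<in>PiE (insert j S) (\<lambda>_. A). g c) = (\<Sum>(d,c)\<in>A \<times> PiE S (\<lambda>_. A). g (c(j:=d)))"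
    using assms
    by (intro sum.reindex_bij_witness[of _ "\<lambda>(d,c). c(j:=d)" "\<lambda>c. (c j, c(j:=undefined))"])
       (auto simp: PiE_def extensional_def)
  also have "\<dots> = (\<Sum>d\<in>A. \<Sum>c\<in>PiE S (\<lambda>_. A). g (c(j:=d)))"
    by (subst sum.cartesian_product) auto
  finally show ?thesis by simp
qed

lemma matmul_id:
  assumes "b \<in> {1..N}"
  shows "matmul N M matid a b = M a b"
proof -
  have "matmul N M matid a b = (\<Sum>c\<in>{1..N}. if c = b then M a c else 0)"
    unfolding matmul_def matid_def by (intro sum.cong) auto
  also have "\<dots> = M a b" using assms by (simp add: sum.delta)
  finally show ?thesis .
qed

lemma path:
  assumes "j \<le> m" "b \<in> {1..N}"
  shows "matprod_list N (map M [j..<Suc m]) a b =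
    (\<Sum>c\<in>PiE {Suc j..m} (\<lambda>_. {1..N}). \<Prod>l=j..m. M l ((c(j:=a, Suc m:=b)) l) ((c(j:=a, Suc m:=b)) (Suc l)))"
  using assms
proof (induction "m - j" arbitrary: j a)
  case 0
  then have j: "j = m" by simp
  show ?case using 0 j by (simp add: matprod_list_def matmul_id)
next
  case (Suc k)
  then have jm: "j < m" by simp
  have up: "[j..<Suc m] = j # [Suc j..<Suc m]" using jm by (simp add: upt_conv_Cons)
  have IH: "\<And>d. matprod_list N (map M [Suc j..<Suc m]) d b =
    (\<Sum>c\<in>PiE {Suc (Suc j)..m} (\<lambda>_. {1..N}). \<Prod>l=Suc j..m. M l ((c(Suc j:=d, Suc m:=b)) l) ((c(Suc j:=d, Suc m:=b)) (Suc l)))"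
    using Suc by (intro Suc.hyps) auto
  define g where "g = (\<lambda>c. M j a (c (Suc j)) * (\<Prod>l=Suc j..m. M l ((c(Suc m:=b)) l) ((c(Suc m:=b)) (Suc l))))"
  have "matprod_list N (map M [j..<Suc m]) a b = (\<Sum>d=1..N. M j a d * matprod_list N (map M [Suc j..<Suc m]) d b)"
  proof -
    have "\<And>L. matprod_list N (map M (j # L)) = matmul N (M j) (matprod_list N (map M L))"
      by (simp add: matprod_list_def)
    then show ?thesis unfolding up by (simp only:) (simp add: matmul_def)
  qed
  also have "\<dots> = (\<Sum>d\<in>{1..N}. \<Sum>c\<in>PiE {Suc (Suc j)..m} (\<lambda>_. {1..N}). g (c(Suc j:=d)))"
    unfolding IH g_def by (simp add: sum_distrib_left)
  also have "\<dots> = (\<Sum>c\<in>PiE (insert (Suc j) {Suc (Suc j)..m}) (\<lambda>_. {1..N}). g c)"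
    by (rule RL) auto
  also have "insert (Suc j) {Suc (Suc j)..m} = {Suc j..m}" using jm by auto
  also have "(\<Sum>c\<in>PiE {Suc j..m} (\<lambda>_. {1..N}). g c) = (\<Sum>c\<in>PiE {Suc j..m} (\<lambda>_. {1..N}).
       \<Prod>l=j..m. M l ((c(j:=a, Suc m:=b)) l) ((c(j:=a, Suc m:=b)) (Suc l)))"
  proof (intro sum.cong refl)
    fix c
    have "(\<Prod>l=j..m. M l ((c(j:=a, Suc m:=b)) l) ((c(j:=a, Suc m:=b)) (Suc l)))
       = M j a (c (Suc j)) * (\<Prod>l=Suc j..m. M l ((c(j:=a, Suc m:=b)) l) ((c(j:=a, Suc m:=b)) (Suc l)))"
      using jm by (simp add: prod.atLeast_Suc_atMost)
    also have "(\<Prod>l=Suc j..m. M l ((c(j:=a, Suc m:=b)) l) ((c(j:=a, Suc m:=b)) (Suc l)))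
       = (\<Prod>l=Suc j..m. M l ((c(Suc m:=b)) l) ((c(Suc m:=b)) (Suc l)))"
      by (intro prod.cong refl) auto
    finally show "g c = (\<Prod>l=j..m. M l ((c(j:=a, Suc m:=b)) l) ((c(j:=a, Suc m:=b)) (Suc l)))"
      unfolding g_def by (rule sym)
  qed
  finally show ?case .
qed

lemma trace_path:
  assumes "1 \<le> m"
  shows "mtrace N (matprod_list N (map M [1..<Suc m])) =
    (\<Sum>c\<in>PiE {1..m} (\<lambda>_. {1..N}). \<Prod>l=1..m. M l ((c(Suc m := c 1)) l) ((c(Suc m := c 1)) (Suc l)))"
proof -
  define g where "g = (\<lambda>c::nat\<Rightarrow>nat. \<Prod>l=1..m. M l ((c(Suc m := c 1)) l) ((c(Suc m := c 1)) (Suc l)))"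
  have "mtrace N (matprod_list N (map M [1..<Suc m])) =
     (\<Sum>a\<in>{1..N}. \<Sum>c\<in>PiE {Suc 1..m} (\<lambda>_. {1..N}). g (c(1:=a)))"
    unfolding mtrace_def g_def using assms
    by (intro sum.cong refl, subst path) auto
  also have "\<dots> = (\<Sum>c\<in>PiE (insert 1 {Suc 1..m}) (\<lambda>_. {1..N}). g c)"
    by (rule RL) auto
  also have "insert 1 {Suc 1..m} = {1..m}" using assms by auto
  finally show ?thesis unfolding g_def .
qed



definition PP :: "nat \<Rightarrow> (nat \<Rightarrow> nat) \<Rightarrow> int \<Rightarrow> (nat \<Rightarrow> nat) \<Rightarrow> nat \<Rightarrow> nat" where
  "PP N \<alpha> \<sigma> i l = (if \<sigma> = 1 then i l else bar N (i (\<alpha> l)))"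
definition QQ :: "nat \<Rightarrow> (nat \<Rightarrow> nat) \<Rightarrow> int \<Rightarrow> (nat \<Rightarrow> nat) \<Rightarrow> nat \<Rightarrow> nat" where
  "QQ N \<alpha> \<sigma> i l = (if \<sigma> = 1 then i (\<alpha> l) else bar N (i l))"

definition Cond :: "nat \<Rightarrow> nat \<Rightarrow> (nat \<Rightarrow> nat) \<Rightarrow> (nat \<Rightarrow> int) \<Rightarrow> (nat \<Rightarrow> nat) \<Rightarrow> (nat \<Rightarrow> nat) \<Rightarrow> bool" where
  "Cond N m \<alpha> s i c = (\<forall>l\<in>{1..m}. (c(Suc m := c 1)) l = PP N \<alpha> (s l) i l \<and> (c(Suc m := c 1)) (Suc l) = QQ N \<alpha> (s l) i l)"

definition Pairs :: "nat \<Rightarrow> nat \<Rightarrow> (nat \<Rightarrow> nat) \<Rightarrow> (nat \<Rightarrow> int) \<Rightarrow> ((nat \<Rightarrow> nat) \<times> (nat \<Rightarrow> nat)) set" where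
  "Pairs N m \<alpha> s = {p \<in> PiE {1..m} (\<lambda>_. {1..N}) \<times> PiE {1..m} (\<lambda>_. {1..N}). Cond N m \<alpha> s (fst p) (snd p)}"

lemma matF_exp:
  "matF N (i l) (i (\<alpha> l)) u v = (\<Sum>\<sigma>\<in>{1,-1::int}. of_int \<sigma> * (if u = PP N \<alpha> \<sigma> i l \<and> v = QQ N \<alpha> \<sigma> i l then 1 else 0))"
  by (simp add: matF_def matE_def PP_def QQ_def)

lemma prod_ind:
  "finite A \<Longrightarrow> (\<Prod>l\<in>A. (if P l then 1 else 0 :: real)) = (if \<forall>l\<in>A. P l then 1 else 0)"
  by (induction A rule: finite_induct) auto

lemma sign_prod:
  assumes "s \<in> states m"
  shows "(\<Prod>l=1..m. real_of_int (s l)) = of_int (state_sign m s)"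
proof -
  have "(\<Prod>l=1..m. real_of_int (s l)) = (\<Prod>l=1..m. if s l = -1 then -1 else 1)"
    using assms by (intro prod.cong refl) (auto simp: states_def PiE_def Pi_def)
  also have "\<dots> = (\<Prod>l\<in>{1..m} \<inter> {l. s l = -1}. -1) * (\<Prod>l\<in>{1..m} \<inter> - {l. s l = -1}. 1)"
    by (rule prod.If_cases) auto
  also have "\<dots> = (-1) ^ card {l \<in> {1..m}. s l = -1}"
    by (simp add: Int_def conj_commute)
  finally show ?thesis by (simp add: state_sign_def)
qed

lemma trace_exp:
  assumes "1 \<le> m"
  shows "mtrace N (rho_w_so N m \<alpha>) = (\<Sum>s\<in>states m. of_int (state_sign m s) * real (card (Pairs N m \<alpha> s)))"
proof -
  let ?I = "PiE {1..m} (\<lambda>_. {1..N})"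
  let ?C = "PiE {1..m} (\<lambda>_. {1..N})"
  have fin: "finite ?I" by (simp add: finite_PiE)
  have "mtrace N (rho_w_so N m \<alpha>) = (\<Sum>i\<in>?I. mtrace N (matprod_list N (map (\<lambda>l. matF N (i l) (i (\<alpha> l))) [1..<Suc m])))"
    unfolding mtrace_def rho_w_so_def Suc_eq_plus1 by (rule sum.swap)
  also have "\<dots> = (\<Sum>i\<in>?I. \<Sum>c\<in>?C. \<Sum>s\<in>states m. of_int (state_sign m s) * (if Cond N m \<alpha> s i c then 1 else 0))"
  proof (intro sum.cong refl)
    fix i
    show "mtrace N (matprod_list N (map (\<lambda>l. matF N (i l) (i (\<alpha> l))) [1..<Suc m])) =
          (\<Sum>c\<in>?C. \<Sum>s\<in>states m. of_int (state_sign m s) * (if Cond N m \<alpha> s i c then 1 else 0))"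
      unfolding trace_path[OF assms]
    proof (intro sum.cong refl)
      fix c :: "nat \<Rightarrow> nat"
      let ?e = "c(Suc m := c 1)"
      have "(\<Prod>l=1..m. matF N (i l) (i (\<alpha> l)) (?e l) (?e (Suc l))) =
         (\<Prod>l\<in>{1..m}. \<Sum>\<sigma>\<in>{1,-1::int}. of_int \<sigma> * (if ?e l = PP N \<alpha> \<sigma> i l \<and> ?e (Suc l) = QQ N \<alpha> \<sigma> i l then 1 else 0))"
        by (simp only: matF_exp)
      also have "\<dots> = (\<Sum>s\<in>states m. \<Prod>l\<in>{1..m}. of_int (s l) * (if ?e l = PP N \<alpha> (s l) i l \<and> ?e (Suc l) = QQ N \<alpha> (s l) i l then 1 else 0))"
        unfolding states_def by (rule prod_sum_PiE) auto
      also have "\<dots> = (\<Sum>s\<in>states m. of_int (state_sign m s) * (if Cond N m \<alpha> s i c then 1 else 0))"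
      proof (intro sum.cong refl)
        fix s assume s: "s \<in> states m"
        show "(\<Prod>l\<in>{1..m}. of_int (s l) * (if ?e l = PP N \<alpha> (s l) i l \<and> ?e (Suc l) = QQ N \<alpha> (s l) i l then 1 else 0))
              = of_int (state_sign m s) * (if Cond N m \<alpha> s i c then 1 else (0::real))"
          by (simp only: prod.distrib sign_prod[OF s] prod_ind[OF finite_atLeastAtMost] Cond_def)
      qed
      finally show "(\<Prod>l=1..m. matF N (i l) (i (\<alpha> l)) (?e l) (?e (Suc l))) =
          (\<Sum>s\<in>states m. of_int (state_sign m s) * (if Cond N m \<alpha> s i c then 1 else 0))" .
    qed
  qed
  also have "\<dots> = (\<Sum>s\<in>states m. of_int (state_sign m s) * (\<Sum>i\<in>?I. \<Sum>c\<in>?C. (if Cond N m \<alpha> s i c then 1 else 0)))"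
    by (simp add: sum_distrib_left sum.swap[of _ "states m"] sum.swap[of _ "?C"])
  also have "\<dots> = (\<Sum>s\<in>states m. of_int (state_sign m s) * real (card (Pairs N m \<alpha> s)))"
  proof (intro sum.cong refl arg_cong[where f="\<lambda>x. _ * x"])
    fix s
    have "(\<Sum>i\<in>?I. \<Sum>c\<in>?C. (if Cond N m \<alpha> s i c then 1 else 0::real)) =
          (\<Sum>p\<in>?I \<times> ?C. (if Cond N m \<alpha> s (fst p) (snd p) then 1 else 0))"
      by (simp add: sum.cartesian_product case_prod_beta')
    also have "\<dots> = (\<Sum>p\<in>Pairs N m \<alpha> s. 1)"
      unfolding Pairs_def using fin by (intro sum.inter_filter[symmetric]) auto
    also have "\<dots> = real (card (Pairs N m \<alpha> s))" by simp
    finally show "(\<Sum>i\<in>?I. \<Sum>c\<in>?C. (if Cond N m \<alpha> s i c then 1 else 0::real)) = real (card (Pairs N m \<alpha> s))" .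
  qed
  finally show ?thesis .
qed



lemma inv_remove:
  assumes "\<forall>x\<in>V. f x \<in> V \<and> f (f x) = x \<and> f x \<noteq> x" "f v = u" "f u = v"
  shows "\<forall>x\<in>V - {u,v}. f x \<in> V - {u,v} \<and> f (f x) = x \<and> f x \<noteq> x"
proof
  fix x assume x: "x \<in> V - {u,v}"
  then have h: "f x \<in> V" "f (f x) = x" "f x \<noteq> x" using assms(1) by auto
  have "f x \<noteq> u" using h(2) assms(3) x by auto
  moreover have "f x \<noteq> v" using h(2) assms(2) x by auto
  ultimately show "f x \<in> V - {u,v} \<and> f (f x) = x \<and> f x \<noteq> x" using h by auto
qed

lemma bip:
  assumes "finite V" "\<forall>v\<in>V. M1 v \<in> V \<and> M1 (M1 v) = v \<and> M1 v \<noteq> v"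
    "\<forall>v\<in>V. M2 v \<in> V \<and> M2 (M2 v) = v \<and> M2 v \<noteq> v"
  shows "\<exists>\<beta>::'a\<Rightarrow>bool. \<forall>v\<in>V. \<beta> (M1 v) \<noteq> \<beta> v \<and> \<beta> (M2 v) \<noteq> \<beta> v"
  using assms
proof (induction "card V" arbitrary: V M2 rule: less_induct)
  case less
  show ?case
  proof (cases "V = {}")
    case True then show ?thesis by simp
  next
    case False
    then obtain v where v: "v \<in> V" by auto
    define u where "u = M1 v"
    have u: "u \<in> V" "M1 u = v" "u \<noteq> v" using less.prems v u_def by auto
    define V' where "V' = V - {u, v}"
    have cardlt: "card V' < card V" unfolding V'_def using less.prems(1) u v
      by (intro psubset_card_mono) auto
    have finV': "finite V'" using less.prems(1) V'_def by auto
    have M1V': "\<forall>x\<in>V'. M1 x \<in> V' \<and> M1 (M1 x) = x \<and> M1 x \<noteq> x"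
      unfolding V'_def by (rule inv_remove[OF less.prems(2)]) (use u u_def in auto)
    show ?thesis
    proof (cases "M2 v = u")
      case True
      have Mu: "M2 u = v" using True less.prems(3) v by auto
      have M2V': "\<forall>x\<in>V'. M2 x \<in> V' \<and> M2 (M2 x) = x \<and> M2 x \<noteq> x"
        unfolding V'_def by (rule inv_remove[OF less.prems(3)]) (use True Mu in auto)
      obtain \<beta> :: "'a \<Rightarrow> bool" where \<beta>: "\<forall>x\<in>V'. \<beta> (M1 x) \<noteq> \<beta> x \<and> \<beta> (M2 x) \<noteq> \<beta> x"
        using less.hyps[OF cardlt finV' M1V' M2V'] by blast
      define \<gamma> where "\<gamma> = \<beta>(v := True, u := False)"
      have "\<forall>x\<in>V. \<gamma> (M1 x) \<noteq> \<gamma> x \<and> \<gamma> (M2 x) \<noteq> \<gamma> x"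
      proof
        fix x assume x: "x \<in> V"
        show "\<gamma> (M1 x) \<noteq> \<gamma> x \<and> \<gamma> (M2 x) \<noteq> \<gamma> x"
        proof (cases "x \<in> V'")
          case True
          then show ?thesis using \<beta> M1V' M2V' unfolding \<gamma>_def V'_def by auto
        next
          case False
          then have "x = u \<or> x = v" using x V'_def by auto
          then show ?thesis using u True Mu u_def unfolding \<gamma>_def by auto
        qed
      qed
      then show ?thesis by blast
    next
      case False
      define a where "a = M2 v"
      define b where "b = M2 u"
      have P3: "\<And>x. x \<in> V \<Longrightarrow> M2 x \<in> V \<and> M2 (M2 x) = x \<and> M2 x \<noteq> x" using less.prems(3) by blast
      have ab1: "a \<in> V" "a \<noteq> v" "M2 a = v" using P3[OF v] unfolding a_def by auto
      have ab2: "b \<in> V" "b \<noteq> u" "M2 b = u" using P3[OF u(1)] unfolding b_def by auto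
      have ab3: "a \<noteq> u" using False a_def by simp
      have ab4: "b \<noteq> v"
      proof
        assume "b = v" then have "M2 v = u" using ab2(3) by simp
        then show False using ab3 a_def by simp
      qed
      have ab5: "a \<noteq> b" using ab1 ab2 u(3) by auto
      note ab = ab1 ab2 ab3 ab4 ab5
      define M2' where "M2' = M2(a := b, b := a)"
      have M2V': "\<forall>x\<in>V'. M2' x \<in> V' \<and> M2' (M2' x) = x \<and> M2' x \<noteq> x"
      proof
        fix x assume x: "x \<in> V'"
        show "M2' x \<in> V' \<and> M2' (M2' x) = x \<and> M2' x \<noteq> x"
        proof (cases "x = a \<or> x = b")
          case True
          then show ?thesis using ab unfolding M2'_def V'_def by auto
        next
          case False
          have "M2 x \<noteq> v \<and> M2 x \<noteq> u"
          proof -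
            have xV: "x \<in> V" using x unfolding V'_def by auto
            have xx: "M2 (M2 x) = x" using P3[OF xV] by blast
            have "M2 x = v \<Longrightarrow> False"
            proof -
              assume "M2 x = v" then have "x = M2 v" using xx by metis
              then show False using False a_def by blast
            qed
            moreover have "M2 x = u \<Longrightarrow> False"
            proof -
              assume "M2 x = u" then have "x = M2 u" using xx by metis
              then show False using False b_def by blast
            qed
            ultimately show ?thesis by blast
          qed
          then have "M2 x \<noteq> v" "M2 x \<noteq> u" by auto
          moreover have "M2 x \<noteq> a" "M2 x \<noteq> b"
          proof -
            have xV: "x \<in> V" using x unfolding V'_def by auto
            have xx: "M2 (M2 x) = x" using P3[OF xV] by blast
            show "M2 x \<noteq> a" using xx ab1(3) x unfolding V'_def by force
            show "M2 x \<noteq> b" using xx ab2(3) x unfolding V'_def by force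
          qed
          ultimately show ?thesis using False x less.prems(3) unfolding M2'_def V'_def by auto
        qed
      qed
      obtain \<beta> :: "'a \<Rightarrow> bool" where \<beta>: "\<forall>x\<in>V'. \<beta> (M1 x) \<noteq> \<beta> x \<and> \<beta> (M2' x) \<noteq> \<beta> x"
        using less.hyps[OF cardlt finV' M1V' M2V'] by blast
      define \<gamma> where "\<gamma> = \<beta>(v := \<not> \<beta> a, u := \<beta> a)"
      have aV': "a \<in> V'" "b \<in> V'" using ab1 ab2 ab3 ab4 unfolding V'_def by auto
      have M2'a: "M2' a = b" unfolding M2'_def using ab5 by simp
      have "\<beta> (M2' a) \<noteq> \<beta> a" using \<beta> aV'(1) by blast
      then have bab: "\<beta> b \<noteq> \<beta> a" using M2'a by simp
      have gout: "\<And>y. y \<in> V' \<Longrightarrow> \<gamma> y = \<beta> y" unfolding \<gamma>_def V'_def by auto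
      have gv: "\<gamma> v = (\<not> \<beta> a)" unfolding \<gamma>_def using u(3) by simp
      have gu: "\<gamma> u = \<beta> a" unfolding \<gamma>_def by simp
      have "\<forall>x\<in>V. \<gamma> (M1 x) \<noteq> \<gamma> x \<and> \<gamma> (M2 x) \<noteq> \<gamma> x"
      proof
        fix x assume x: "x \<in> V"
        have xx: "M2 (M2 x) = x" using P3[OF x] by blast
        show "\<gamma> (M1 x) \<noteq> \<gamma> x \<and> \<gamma> (M2 x) \<noteq> \<gamma> x"
        proof (cases "x \<in> V'")
          case True
          have "M1 x \<in> V'" using M1V' True by blast
          then have m1: "\<gamma> (M1 x) \<noteq> \<gamma> x" using \<beta> True gout by auto
          have m2: "\<gamma> (M2 x) \<noteq> \<gamma> x"
          proof (cases "x = a \<or> x = b")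
            case True
            then show ?thesis
            proof
              assume "x = a" then show ?thesis using ab1(3) gv gout aV' by simp
            next
              assume "x = b" then show ?thesis using ab2(3) gu gout aV' bab by simp
            qed
          next
            case False
            have "M2 x \<noteq> v"
            proof
              assume "M2 x = v" then have "x = M2 v" using xx by metis
              then show False using False a_def by blast
            qed
            moreover have "M2 x \<noteq> u"
            proof
              assume "M2 x = u" then have "x = M2 u" using xx by metis
              then show False using False b_def by blast
            qed
            ultimately have "M2 x = M2' x" "M2' x \<in> V'" using False M2V' \<open>x \<in> V'\<close> unfolding M2'_def by auto
            then show ?thesis using \<beta> \<open>x \<in> V'\<close> gout by auto
          qed
          show ?thesis using m1 m2 by blast
        next
          case False
          then have "x = u \<or> x = v" using x V'_def by auto
          then show ?thesis
          proof
            assume xu: "x = u"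
            show ?thesis using xu u(2) ab2(1) gv gu gout aV'(2) bab ab2 ab4 b_def by simp
          next
            assume xv: "x = v"
            show ?thesis using xv u_def gv gu gout aV'(1) a_def by simp
          qed
        qed
      qed
      then show ?thesis by blast
    qed
  qed
qed



lemma rt_const:
  assumes "(v, w) \<in> (E \<union> E\<inverse>)\<^sup>*" "\<forall>(a,b)\<in>E. y a = y b"
  shows "y v = y w"
  using assms(1)
proof (induction rule: rtrancl_induct)
  case base then show ?case by simp
next
  case (step w z) then show ?case using assms(2) by auto
qed

lemma count_classes:
  fixes V :: "'a set" and A :: "'b set"
  assumes "finite V" "E \<subseteq> V \<times> V"
  shows "card {y \<in> PiE V (\<lambda>_. A). \<forall>(a,b)\<in>E. y a = y b} = card A ^ card (V // ((E \<union> E\<inverse>)\<^sup>*))"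
proof -
  define R where "R = (E \<union> E\<inverse>)\<^sup>*"
  define Y where "Y = {y \<in> PiE V (\<lambda>_. A). \<forall>(a,b)\<in>E. y a = y b}"
  have eqv: "equiv UNIV R" unfolding R_def
    by (intro equivI refl_rtrancl sym_rtrancl trans_rtrancl) (auto simp: sym_def)
  have Q: "V // R = (\<lambda>x. R``{x}) ` V" unfolding quotient_def by auto
  have finQ: "finite (V // R)" unfolding Q using assms(1) by simp
  define \<phi> where "\<phi> = (\<lambda>g::'a set \<Rightarrow> 'b. \<lambda>v\<in>V. g (R``{v}))"
  define \<psi> where "\<psi> = (\<lambda>y::'a \<Rightarrow> 'b. \<lambda>C\<in>V // R. y (SOME v. v \<in> C \<inter> V))"
  have Rclass: "\<And>v. v \<in> V \<Longrightarrow> R``{v} \<in> V // R" unfolding Q by auto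
  have some: "\<And>v. v \<in> V \<Longrightarrow> (SOME w. w \<in> R``{v} \<inter> V) \<in> R``{v} \<inter> V"
  proof -
    fix v assume v: "v \<in> V"
    have "v \<in> R``{v} \<inter> V" using v unfolding R_def by auto
    then show "(SOME w. w \<in> R``{v} \<inter> V) \<in> R``{v} \<inter> V" by (rule someI)
  qed
  have "bij_betw \<phi> (PiE (V // R) (\<lambda>_. A)) Y"
  proof (rule bij_betw_byWitness[where f'=\<psi>])
    show "\<forall>g\<in>PiE (V // R) (\<lambda>_. A). \<psi> (\<phi> g) = g"
    proof
      fix g assume g: "g \<in> PiE (V // R) (\<lambda>_. A)"
      show "\<psi> (\<phi> g) = g"
      proof (rule ext)
        fix C
        show "\<psi> (\<phi> g) C = g C"
        proof (cases "C \<in> V // R")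
          case True
          then obtain v where v: "v \<in> V" "C = R``{v}" unfolding Q by auto
          define w0 where "w0 = (SOME w. w \<in> C \<inter> V)"
          have w: "w0 \<in> R``{v} \<inter> V" using some[OF v(1)] v(2) unfolding w0_def by simp
          then have "(v, w0) \<in> R" by blast
          then have e: "R``{v} = R``{w0}" by (rule equiv_class_eq[OF eqv])
          have wV: "w0 \<in> V" using w by blast
          have "\<psi> (\<phi> g) C = \<phi> g w0" using True unfolding \<psi>_def w0_def by simp
          also have "\<dots> = g (R``{w0})" using wV unfolding \<phi>_def by simp
          also have "\<dots> = g C" using e v(2) by simp
          finally show ?thesis .
        next
          case False
          then show ?thesis using g unfolding \<psi>_def by (auto simp: PiE_def extensional_def)
        qed
      qed
    qed
    show "\<forall>y\<in>Y. \<phi> (\<psi> y) = y"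
    proof
      fix y assume y: "y \<in> Y"
      show "\<phi> (\<psi> y) = y"
      proof (rule ext)
        fix v
        show "\<phi> (\<psi> y) v = y v"
        proof (cases "v \<in> V")
          case True
          have w: "(SOME w. w \<in> R``{v} \<inter> V) \<in> R``{v} \<inter> V" using some[OF True] .
          have yE: "\<forall>(a,b)\<in>E. y a = y b" using y unfolding Y_def by blast
          have "(v, (SOME w. w \<in> R``{v} \<inter> V)) \<in> (E \<union> E\<inverse>)\<^sup>*" using w unfolding R_def by blast
          from rt_const[OF this yE] have "y v = y (SOME w. w \<in> R``{v} \<inter> V)" .
          then show ?thesis using True Rclass[OF True] unfolding \<phi>_def \<psi>_def by simp
        next
          case False
          then show ?thesis using y unfolding \<phi>_def Y_def by (auto simp: PiE_def extensional_def)
        qed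
      qed
    qed
    show "\<phi> ` PiE (V // R) (\<lambda>_. A) \<subseteq> Y"
    proof
      fix y assume "y \<in> \<phi> ` PiE (V // R) (\<lambda>_. A)"
      then obtain g where g: "g \<in> PiE (V // R) (\<lambda>_. A)" "y = \<phi> g" by auto
      have "y \<in> PiE V (\<lambda>_. A)" using g Rclass unfolding \<phi>_def by auto
      moreover have "\<forall>(a,b)\<in>E. y a = y b"
      proof (intro ballI, clarify)
        fix a b assume ab: "(a,b) \<in> E"
        have "(a, b) \<in> R" using ab unfolding R_def by auto
        then have "R``{a} = R``{b}" using eqv by (simp add: equiv_class_eq)
        then show "y a = y b" using ab assms(2) g(2) unfolding \<phi>_def by auto
      qed
      ultimately show "y \<in> Y" unfolding Y_def by auto
    qed
    show "\<psi> ` Y \<subseteq> PiE (V // R) (\<lambda>_. A)"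
    proof
      fix g assume "g \<in> \<psi> ` Y"
      then obtain y where y: "y \<in> Y" "g = \<psi> y" by auto
      show "g \<in> PiE (V // R) (\<lambda>_. A)"
      proof (rule PiE_I)
        fix C assume C: "C \<in> V // R"
        then obtain v where v: "v \<in> V" "C = R``{v}" unfolding Q by auto
        have "(SOME w. w \<in> C \<inter> V) \<in> V" using some[OF v(1)] v(2) by simp
        then show "g C \<in> A" using y C unfolding \<psi>_def Y_def by auto
      next
        fix C assume "C \<notin> V // R"
        then show "g C = undefined" using y unfolding \<psi>_def by auto
      qed
    qed
  qed
  then have "card Y = card (PiE (V // R) (\<lambda>_. A))" by (simp add: bij_betw_same_card)
  also have "\<dots> = card A ^ card (V // R)" using finQ by (simp add: card_PiE)
  finally show ?thesis unfolding Y_def R_def .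
qed

definition barp :: "nat \<Rightarrow> bool \<Rightarrow> nat \<Rightarrow> nat" where
  "barp N p x = (if p then bar N x else x)"

lemma barp_range: "x \<in> {1..N} \<Longrightarrow> barp N p x \<in> {1..N}"
  by (auto simp: barp_def bar_def)

lemma barp_comp: "x \<in> {1..N} \<Longrightarrow> barp N p (barp N q x) = barp N (p \<noteq> q) x"
  by (auto simp: barp_def bar_def)

lemma twist_card:
  fixes V :: "'a set" and \<tau> :: "'a \<Rightarrow> bool"
  assumes "\<forall>(a,b,p)\<in>T. a \<in> V \<and> b \<in> V \<and> ((\<tau> a \<noteq> \<tau> b) = p)"
  shows "card {x\<in>PiE V (\<lambda>_. {1..N}). \<forall>(a,b,p)\<in>T. x a = barp N p (x b)}
       = card {y\<in>PiE V (\<lambda>_. {1..N}). \<forall>(a,b,p)\<in>T. y a = y b}"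
proof -
  define \<phi> where "\<phi> = (\<lambda>x::'a \<Rightarrow> nat. \<lambda>v\<in>V. barp N (\<tau> v) (x v))"
  let ?X = "{x\<in>PiE V (\<lambda>_. {1..N}). \<forall>(a,b,p)\<in>T. x a = barp N p (x b)}"
  let ?Y = "{y\<in>PiE V (\<lambda>_. {1..N}). \<forall>(a,b,p)\<in>T. y a = y b}"
  have inv: "\<And>x. x \<in> PiE V (\<lambda>_. {1..N}) \<Longrightarrow> \<phi> (\<phi> x) = x"
  proof (rule ext)
    fix x v assume x: "x \<in> PiE V (\<lambda>_. {1..N})"
    show "\<phi> (\<phi> x) v = x v"
    proof (cases "v \<in> V")
      case True
      then have "x v \<in> {1..N}" using x by auto
      then show ?thesis using True unfolding \<phi>_def by (simp add: barp_comp) (simp add: barp_def)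
    next
      case False then show ?thesis using x unfolding \<phi>_def by (auto simp: PiE_def extensional_def)
    qed
  qed
  have rng: "\<And>x. x \<in> PiE V (\<lambda>_. {1..N}) \<Longrightarrow> \<phi> x \<in> PiE V (\<lambda>_. {1..N})"
    unfolding \<phi>_def using barp_range by (auto simp: PiE_def Pi_def simp del: atLeastAtMost_iff)
  have "bij_betw \<phi> ?X ?Y"
  proof (rule bij_betw_byWitness[where f'=\<phi>])
    show "\<forall>x\<in>?X. \<phi> (\<phi> x) = x" using inv by blast
    show "\<forall>x\<in>?Y. \<phi> (\<phi> x) = x" using inv by blast
    show "\<phi> ` ?X \<subseteq> ?Y"
    proof (rule image_subsetI)
      fix x assume "x \<in> ?X"
      then have x: "x \<in> PiE V (\<lambda>_. {1..N})" "\<forall>(a,b,p)\<in>T. x a = barp N p (x b)" by auto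
      show "\<phi> x \<in> ?Y"
      proof (intro CollectI conjI rng[OF x(1)] ballI)
        fix t' assume "t' \<in> T"
        then obtain a b p where t: "(a,b,p) \<in> T" and t'd: "t' = (a,b,p)" by (cases t') auto
        then have ab: "a \<in> V" "b \<in> V" "(\<tau> a \<noteq> \<tau> b) = p" using assms by auto
        have xb: "x b \<in> {1..N}" using x(1) ab by auto
        have "\<phi> x a = barp N (\<tau> a) (barp N p (x b))" using ab x(2) t unfolding \<phi>_def by auto
        also have "\<dots> = barp N (\<tau> b) (x b)"
        proof -
          have e: "(\<tau> a \<noteq> p) = \<tau> b" using ab(3) by auto
          show ?thesis by (subst barp_comp[OF xb], subst e, rule refl)
        qed
        also have "\<dots> = \<phi> x b" using ab unfolding \<phi>_def by simp
        finally show "case t' of (a,b,p) \<Rightarrow> \<phi> x a = \<phi> x b" using t'd by simp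
      qed
    qed
    show "\<phi> ` ?Y \<subseteq> ?X"
    proof (rule image_subsetI)
      fix x assume "x \<in> ?Y"
      then have x: "x \<in> PiE V (\<lambda>_. {1..N})" "\<forall>(a,b,p)\<in>T. x a = x b" by auto
      show "\<phi> x \<in> ?X"
      proof (intro CollectI conjI rng[OF x(1)] ballI)
        fix t' assume "t' \<in> T"
        then obtain a b p where t: "(a,b,p) \<in> T" and t'd: "t' = (a,b,p)" by (cases t') auto
        then have ab: "a \<in> V" "b \<in> V" "(\<tau> a \<noteq> \<tau> b) = p" using assms by auto
        have xb: "x b \<in> {1..N}" using x(1) ab by auto
        have "\<phi> x a = barp N (\<tau> a) (x b)" using ab x(2) t unfolding \<phi>_def by auto
        also have "\<dots> = barp N p (barp N (\<tau> b) (x b))"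
        proof -
          have e: "(p \<noteq> \<tau> b) = \<tau> a" using ab(3) by auto
          show ?thesis by (subst barp_comp[OF xb], subst e, rule refl)
        qed
        also have "\<dots> = barp N p (\<phi> x b)" using ab unfolding \<phi>_def by simp
        finally show "case t' of (a,b,p) \<Rightarrow> \<phi> x a = barp N p (\<phi> x b)" using t'd by simp
      qed
    qed
  qed
  then show ?thesis by (rule bij_betw_same_card)
qed



definition nxt :: "nat \<Rightarrow> nat \<Rightarrow> nat" where "nxt m l = (if l = m then 1 else Suc l)"
definition prv :: "nat \<Rightarrow> nat \<Rightarrow> nat" where "prv m l = (if l = 1 then m else l - 1)"
definition sg :: "(nat \<Rightarrow> int) \<Rightarrow> nat \<Rightarrow> bool" where "sg s l = (s l \<noteq> 1)"

definition Tri :: "nat \<Rightarrow> (nat \<Rightarrow> nat) \<Rightarrow> (nat \<Rightarrow> int) \<Rightarrow> ((nat \<times> bool) \<times> (nat \<times> bool) \<times> bool) set" where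
  "Tri m \<alpha> s = {((l,True),(nxt m l,False),False) | l. l \<in> {1..m}}
     \<union> {(tail_pt s k, head_pt s (\<alpha> k), sg s k \<noteq> sg s (\<alpha> k)) | k. k \<in> {1..m}}"

lemma tail_pt_eq: "tail_pt s l = (l, s l = 1)" by (simp add: tail_pt_def)
lemma head_pt_eq: "head_pt s l = (l, s l \<noteq> 1)" by (simp add: head_pt_def)

lemma nxt_in: "1 \<le> m \<Longrightarrow> l \<in> {1..m} \<Longrightarrow> nxt m l \<in> {1..m}" by (auto simp: nxt_def)
lemma prv_in: "1 \<le> m \<Longrightarrow> l \<in> {1..m} \<Longrightarrow> prv m l \<in> {1..m}" by (auto simp: prv_def)
lemma prv_nxt: "l \<in> {1..m} \<Longrightarrow> prv m (nxt m l) = l" by (auto simp: nxt_def prv_def)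
lemma nxt_prv: "l \<in> {1..m} \<Longrightarrow> nxt m (prv m l) = l" by (auto simp: nxt_def prv_def)

lemma gedges_Tri:
  assumes "1 \<le> m"
  shows "gedges m \<alpha> s = (\<lambda>(a,b,p). (a,b)) ` Tri m \<alpha> s"
proof -
  have L: "{((l, True), (l + 1, False)) | l. 1 \<le> l \<and> l < m} \<union> {((m, True), (1, False))}
      = {((l,True),(nxt m l,False)) | l. l \<in> {1..m}}"
  proof (intro equalityI subsetI)
    fix e assume "e \<in> {((l, True), (l + 1, False)) | l. 1 \<le> l \<and> l < m} \<union> {((m, True), (1, False))}"
    then show "e \<in> {((l,True),(nxt m l,False)) | l. l \<in> {1..m}}"
    proof
      assume "e \<in> {((l, True), (l + 1, False)) | l. 1 \<le> l \<and> l < m}"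
      then obtain l where "e = ((l, True), (l + 1, False))" "1 \<le> l" "l < m" by blast
      then show ?thesis by (intro CollectI exI[of _ l]) (auto simp: nxt_def)
    next
      assume "e \<in> {((m, True), (1, False))}"
      then show ?thesis using assms by (intro CollectI exI[of _ m]) (auto simp: nxt_def)
    qed
  next
    fix e assume "e \<in> {((l,True),(nxt m l,False)) | l. l \<in> {1..m}}"
    then obtain l where l: "e = ((l,True),(nxt m l,False))" "l \<in> {1..m}" by blast
    show "e \<in> {((l, True), (l + 1, False)) | l. 1 \<le> l \<and> l < m} \<union> {((m, True), (1, False))}"
    proof (cases "l = m")
      case True then show ?thesis using l by (simp add: nxt_def)
    next
      case False then show ?thesis using l by (auto simp: nxt_def)
    qed
  qed
  have "(\<lambda>(a,b,p). (a,b)) ` Tri m \<alpha> s = {((l,True),(nxt m l,False)) | l. l \<in> {1..m}}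
     \<union> {(tail_pt s k, head_pt s (\<alpha> k)) | k. k \<in> {1..m}}"
    unfolding Tri_def Setcompr_eq_image image_Un image_image by simp
  then show ?thesis unfolding gedges_def L[symmetric] by simp
qed



lemma tau_exists:
  assumes m: "1 \<le> m" and perm: "\<alpha> permutes {1..m}"
  shows "\<exists>\<tau>::nat \<times> bool \<Rightarrow> bool. \<forall>(a,b,p)\<in>Tri m \<alpha> s. a \<in> gverts m \<and> b \<in> gverts m \<and> ((\<tau> a \<noteq> \<tau> b) = p)"
proof -
  define V where "V = gverts m"
  have V: "V = {1..m} \<times> UNIV" unfolding V_def gverts_def by simp
  define Lm where "Lm = (\<lambda>(l::nat,b::bool). if b then (nxt m l, False) else (prv m l, True))"
  define Am where "Am = (\<lambda>(l::nat,b::bool). if b = (s l = 1) then (\<alpha> l, s (\<alpha> l) \<noteq> 1) else (inv \<alpha> l, s (inv \<alpha> l) = 1))"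
  have ai: "\<And>l. l \<in> {1..m} \<Longrightarrow> \<alpha> l \<in> {1..m}" by (simp only: permutes_in_image[OF perm])
  have ii: "\<And>l. l \<in> {1..m} \<Longrightarrow> inv \<alpha> l \<in> {1..m}" by (simp only: permutes_in_image[OF permutes_inv[OF perm]])
  have ainv: "\<And>l. \<alpha> (inv \<alpha> l) = l" "\<And>l. inv \<alpha> (\<alpha> l) = l" using permutes_inverses[OF perm] by auto
  have hL: "\<forall>v\<in>V. Lm v \<in> V \<and> Lm (Lm v) = v \<and> Lm v \<noteq> v"
  proof
    fix v assume v: "v \<in> V"
    obtain l b where lb: "v = (l,b)" by (cases v)
    have l: "l \<in> {1..m}" using v lb V by auto
    show "Lm v \<in> V \<and> Lm (Lm v) = v \<and> Lm v \<noteq> v"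
      using l lb nxt_in[OF m l] prv_in[OF m l] prv_nxt[OF l] nxt_prv[OF l] unfolding Lm_def V by (cases b) auto
  qed
  have hA: "\<forall>v\<in>V. Am v \<in> V \<and> Am (Am v) = v \<and> Am v \<noteq> v"
  proof
    fix v assume v: "v \<in> V"
    obtain l b where lb: "v = (l,b)" by (cases v)
    have l: "l \<in> {1..m}" using v lb V by auto
    show "Am v \<in> V \<and> Am (Am v) = v \<and> Am v \<noteq> v"
    proof (cases "b = (s l = 1)")
      case True
      then show ?thesis using l lb ai[OF l] ainv unfolding Am_def V by auto
    next
      case False
      then show ?thesis using l lb ii[OF l] ainv unfolding Am_def V by auto
    qed
  qed
  have finV: "finite V" unfolding V by simp
  obtain \<beta> :: "nat \<times> bool \<Rightarrow> bool" where \<beta>: "\<forall>v\<in>V. \<beta> (Lm v) \<noteq> \<beta> v \<and> \<beta> (Am v) \<noteq> \<beta> v"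
    using bip[OF finV hL hA] by blast
  define \<tau> where "\<tau> = (\<lambda>v. snd v \<noteq> \<beta> v)"
  have "\<forall>(a,b,p)\<in>Tri m \<alpha> s. a \<in> V \<and> b \<in> V \<and> ((\<tau> a \<noteq> \<tau> b) = p)"
  proof
    fix t assume t: "t \<in> Tri m \<alpha> s"
    show "case t of (a,b,p) \<Rightarrow> a \<in> V \<and> b \<in> V \<and> ((\<tau> a \<noteq> \<tau> b) = p)"
    using t unfolding Tri_def
    proof (rule UnE)
      assume "t \<in> {((l,True),(nxt m l,False),False) | l. l \<in> {1..m}}"
      then obtain l where l: "t = ((l,True),(nxt m l,False),False)" "l \<in> {1..m}" by auto
      have aV: "(l,True) \<in> V" using l V by auto
      have "Lm (l,True) = (nxt m l, False)" unfolding Lm_def by simp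
      then have "\<beta> (nxt m l, False) \<noteq> \<beta> (l,True)" using \<beta> aV by metis
      then show ?thesis using l aV nxt_in[OF m l(2)] V unfolding \<tau>_def by auto
    next
      assume "t \<in> {(tail_pt s k, head_pt s (\<alpha> k), sg s k \<noteq> sg s (\<alpha> k)) | k. k \<in> {1..m}}"
      then obtain k where k: "t = (tail_pt s k, head_pt s (\<alpha> k), sg s k \<noteq> sg s (\<alpha> k))" "k \<in> {1..m}"
        by auto
      have aV: "tail_pt s k \<in> V" using k V by (simp add: tail_pt_eq)
      have "Am (tail_pt s k) = head_pt s (\<alpha> k)" unfolding Am_def by (simp add: tail_pt_eq head_pt_eq)
      then have "\<beta> (head_pt s (\<alpha> k)) \<noteq> \<beta> (tail_pt s k)" using \<beta> aV by metis
      then show ?thesis using k aV ai[OF k(2)] V unfolding \<tau>_def sg_def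
        by (auto simp: tail_pt_eq head_pt_eq)
    qed
  qed
  then have **: "\<forall>(a,b,p)\<in>Tri m \<alpha> s. a \<in> gverts m \<and> b \<in> gverts m \<and> ((\<tau> a \<noteq> \<tau> b) = p)"
    unfolding V_def .
  show ?thesis by (rule exI[of _ \<tau>]) (rule **)
qed



definition xfun :: "nat \<Rightarrow> (nat \<Rightarrow> nat) \<Rightarrow> nat \<times> bool \<Rightarrow> nat" where
  "xfun m c v = (if snd v then c (nxt m (fst v)) else c (fst v))"

definition Xs :: "nat \<Rightarrow> nat \<Rightarrow> (nat \<Rightarrow> nat) \<Rightarrow> (nat \<Rightarrow> int) \<Rightarrow> (nat \<times> bool \<Rightarrow> nat) set" where
  "Xs N m \<alpha> s = {x \<in> PiE (gverts m) (\<lambda>_. {1..N}). \<forall>(a,b,p)\<in>Tri m \<alpha> s. x a = barp N p (x b)}"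

lemma cond_l:
  assumes "l \<in> {1..m}" "s l \<in> {1,-1}"
  shows "((c(Suc m := c 1)) l = PP N \<alpha> (s l) i l \<and> (c(Suc m := c 1)) (Suc l) = QQ N \<alpha> (s l) i l) \<longleftrightarrow>
     (xfun m c (head_pt s l) = barp N (sg s l) (i l) \<and> xfun m c (tail_pt s l) = barp N (sg s l) (i (\<alpha> l)))"
  using assms by (auto simp: PP_def QQ_def xfun_def head_pt_eq tail_pt_eq sg_def barp_def nxt_def)

lemma Cond_iff:
  assumes "s \<in> states m"
  shows "Cond N m \<alpha> s i c \<longleftrightarrow> (\<forall>l\<in>{1..m}. xfun m c (head_pt s l) = barp N (sg s l) (i l) \<and> xfun m c (tail_pt s l) = barp N (sg s l) (i (\<alpha> l)))"
proof -
  have "\<And>l. l \<in> {1..m} \<Longrightarrow> s l \<in> {1,-1}" using assms unfolding states_def by auto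
  then show ?thesis unfolding Cond_def using cond_l by blast
qed

lemma barp_id: "barp N False x = x" by (simp add: barp_def)

lemma card_Pairs:
  assumes m: "1 \<le> m" and perm: "\<alpha> permutes {1..m}" and s: "s \<in> states m"
  shows "card (Pairs N m \<alpha> s) = card (Xs N m \<alpha> s)"
proof -
  define V where "V = gverts m"
  have V: "V = {1..m} \<times> UNIV" unfolding V_def gverts_def by simp
  have ai: "\<And>l. l \<in> {1..m} \<Longrightarrow> \<alpha> l \<in> {1..m}" by (simp only: permutes_in_image[OF perm])
  have hV: "\<And>l. l \<in> {1..m} \<Longrightarrow> head_pt s l \<in> V" "\<And>l. l \<in> {1..m} \<Longrightarrow> tail_pt s l \<in> V"
    unfolding V by (auto simp: head_pt_eq tail_pt_eq)
  define f where "f = (\<lambda>p::(nat\<Rightarrow>nat)\<times>(nat\<Rightarrow>nat). \<lambda>v\<in>V. xfun m (snd p) v)"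
  define g where "g = (\<lambda>x::nat\<times>bool\<Rightarrow>nat. (\<lambda>l\<in>{1..m}. barp N (sg s l) (x (head_pt s l)), \<lambda>l\<in>{1..m}. x (l, False)))"
  have loopT: "\<And>l. l \<in> {1..m} \<Longrightarrow> ((l,True),(nxt m l,False),False) \<in> Tri m \<alpha> s" unfolding Tri_def by blast
  have arrT: "\<And>k. k \<in> {1..m} \<Longrightarrow> (tail_pt s k, head_pt s (\<alpha> k), sg s k \<noteq> sg s (\<alpha> k)) \<in> Tri m \<alpha> s"
    unfolding Tri_def by blast
  have xg: "\<And>x v. x \<in> Xs N m \<alpha> s \<Longrightarrow> v \<in> V \<Longrightarrow> xfun m (snd (g x)) v = x v"
  proof -
    fix x v assume x: "x \<in> Xs N m \<alpha> s" and v: "v \<in> V"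
    obtain l b where lb: "v = (l,b)" by (cases v)
    have l: "l \<in> {1..m}" using v lb V by auto
    show "xfun m (snd (g x)) v = x v"
    proof (cases b)
      case False then show ?thesis using lb l unfolding xfun_def g_def by simp
    next
      case True
      have "x (l,True) = barp N False (x (nxt m l, False))" using x loopT[OF l] unfolding Xs_def by fastforce
      then show ?thesis using lb l True nxt_in[OF m l] unfolding xfun_def g_def by (simp add: barp_id)
    qed
  qed
  have "bij_betw f (Pairs N m \<alpha> s) (Xs N m \<alpha> s)"
  proof (rule bij_betw_byWitness[where f'=g])
    show "\<forall>p\<in>Pairs N m \<alpha> s. g (f p) = p"
    proof
      fix p assume p: "p \<in> Pairs N m \<alpha> s"
      obtain i c where ic: "p = (i,c)" by (cases p)
      have i: "i \<in> PiE {1..m} (\<lambda>_. {1..N})" and c: "c \<in> PiE {1..m} (\<lambda>_. {1..N})" and cond: "Cond N m \<alpha> s i c"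
        using p ic unfolding Pairs_def by auto
      have C: "\<And>l. l \<in> {1..m} \<Longrightarrow> xfun m c (head_pt s l) = barp N (sg s l) (i l)"
        using cond Cond_iff[OF s] by blast
      have "fst (g (f p)) = i"
      proof (rule ext)
        fix l show "fst (g (f p)) l = i l"
        proof (cases "l \<in> {1..m}")
          case True
          have il: "i l \<in> {1..N}" using i True by auto
          show ?thesis using True hV(1)[OF True] C[OF True] il unfolding g_def f_def ic
            by (simp add: barp_comp barp_id)
        next
          case False then show ?thesis using i unfolding g_def by (auto simp: PiE_def extensional_def)
        qed
      qed
      moreover have "snd (g (f p)) = c"
      proof (rule ext)
        fix l show "snd (g (f p)) l = c l"
        proof (cases "l \<in> {1..m}")
          case True
          then show ?thesis unfolding g_def f_def ic V by (simp add: xfun_def)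
        next
          case False then show ?thesis using c unfolding g_def by (auto simp: PiE_def extensional_def)
        qed
      qed
      ultimately show "g (f p) = p" unfolding ic by (simp add: prod_eq_iff)
    qed
    show "\<forall>x\<in>Xs N m \<alpha> s. f (g x) = x"
    proof
      fix x assume x: "x \<in> Xs N m \<alpha> s"
      show "f (g x) = x"
      proof (rule ext)
        fix v show "f (g x) v = x v"
        proof (cases "v \<in> V")
          case True then show ?thesis using xg[OF x True] unfolding f_def by simp
        next
          case False
          have "x \<in> PiE (gverts m) (\<lambda>_. {1..N})" using x unfolding Xs_def by blast
          then have "x v = undefined" using False unfolding V_def by (rule PiE_arb)
          then show ?thesis using False unfolding f_def by simp
        qed
      qed
    qed
    show "f ` Pairs N m \<alpha> s \<subseteq> Xs N m \<alpha> s"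
    proof (rule image_subsetI)
      fix p assume p: "p \<in> Pairs N m \<alpha> s"
      obtain i c where ic: "p = (i,c)" by (cases p)
      have i: "i \<in> PiE {1..m} (\<lambda>_. {1..N})" and c: "c \<in> PiE {1..m} (\<lambda>_. {1..N})" and cond: "Cond N m \<alpha> s i c"
        using p ic unfolding Pairs_def by auto
      have C: "\<And>l. l \<in> {1..m} \<Longrightarrow> xfun m c (head_pt s l) = barp N (sg s l) (i l) \<and> xfun m c (tail_pt s l) = barp N (sg s l) (i (\<alpha> l))"
        using cond Cond_iff[OF s] by blast
      have rng: "f p \<in> PiE V (\<lambda>_. {1..N})"
      proof (rule PiE_I)
        fix v assume v: "v \<in> V"
        then have "fst v \<in> {1..m}" using V by auto
        then have "c (fst v) \<in> {1..N}" "c (nxt m (fst v)) \<in> {1..N}" using c nxt_in[OF m] by auto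
        then show "f p v \<in> {1..N}" using v unfolding f_def ic xfun_def by auto
      next
        fix v assume "v \<notin> V" then show "f p v = undefined" unfolding f_def by simp
      qed
      have tri: "\<forall>(a,b,q)\<in>Tri m \<alpha> s. f p a = barp N q (f p b)"
      proof
        fix t assume t: "t \<in> Tri m \<alpha> s"
        show "case t of (a,b,q) \<Rightarrow> f p a = barp N q (f p b)"
          using t unfolding Tri_def
        proof (rule UnE)
          assume "t \<in> {((l,True),(nxt m l,False),False) | l. l \<in> {1..m}}"
          then obtain l where l: "t = ((l,True),(nxt m l,False),False)" "l \<in> {1..m}" by auto
          have "(l,True) \<in> V" "(nxt m l, False) \<in> V" using l nxt_in[OF m l(2)] V by auto
          then show ?thesis using l unfolding f_def ic by (simp add: xfun_def barp_id)
        next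
          assume "t \<in> {(tail_pt s k, head_pt s (\<alpha> k), sg s k \<noteq> sg s (\<alpha> k)) | k. k \<in> {1..m}}"
          then obtain k where k: "t = (tail_pt s k, head_pt s (\<alpha> k), sg s k \<noteq> sg s (\<alpha> k))" "k \<in> {1..m}"
            by auto
          have ak: "\<alpha> k \<in> {1..m}" using ai k(2) by blast
          have iak: "i (\<alpha> k) \<in> {1..N}" using i ak by auto
          have "f p (tail_pt s k) = barp N (sg s k) (i (\<alpha> k))" using C[OF k(2)] hV(2)[OF k(2)] unfolding f_def ic by simp
          also have "\<dots> = barp N (sg s k \<noteq> sg s (\<alpha> k)) (barp N (sg s (\<alpha> k)) (i (\<alpha> k)))"
          proof -
            have e: "((sg s k \<noteq> sg s (\<alpha> k)) \<noteq> sg s (\<alpha> k)) = sg s k" by auto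
            show ?thesis by (subst barp_comp[OF iak], subst e, rule refl)
          qed
          also have "barp N (sg s (\<alpha> k)) (i (\<alpha> k)) = f p (head_pt s (\<alpha> k))"
            using C[OF ak] hV(1)[OF ak] unfolding f_def ic by simp
          finally show ?thesis using k(1) by simp
        qed
      qed
      show "f p \<in> Xs N m \<alpha> s" using rng tri unfolding Xs_def V_def by blast
    qed
    show "g ` Xs N m \<alpha> s \<subseteq> Pairs N m \<alpha> s"
    proof (rule image_subsetI)
      fix x assume x: "x \<in> Xs N m \<alpha> s"
      have xr: "x \<in> PiE V (\<lambda>_. {1..N})" and xt: "\<forall>(a,b,q)\<in>Tri m \<alpha> s. x a = barp N q (x b)"
        using x unfolding Xs_def V_def by auto
      have xv: "\<And>v. v \<in> V \<Longrightarrow> x v \<in> {1..N}" using xr by auto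
      have i: "fst (g x) \<in> PiE {1..m} (\<lambda>_. {1..N})"
        unfolding g_def using xv hV(1) barp_range by auto
      have c: "snd (g x) \<in> PiE {1..m} (\<lambda>_. {1..N})"
        unfolding g_def using xv V by auto
      have "\<forall>l\<in>{1..m}. xfun m (snd (g x)) (head_pt s l) = barp N (sg s l) (fst (g x) l) \<and>
                       xfun m (snd (g x)) (tail_pt s l) = barp N (sg s l) (fst (g x) (\<alpha> l))"
      proof
        fix l assume l: "l \<in> {1..m}"
        have al: "\<alpha> l \<in> {1..m}" using ai l by blast
        have h1: "xfun m (snd (g x)) (head_pt s l) = x (head_pt s l)" using xg[OF x hV(1)[OF l]] .
        have h2: "xfun m (snd (g x)) (tail_pt s l) = x (tail_pt s l)" using xg[OF x hV(2)[OF l]] .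
        have xh: "x (head_pt s l) \<in> {1..N}" "x (head_pt s (\<alpha> l)) \<in> {1..N}" using xv hV(1) l al by auto
        have "barp N (sg s l) (fst (g x) l) = x (head_pt s l)"
          using l xh unfolding g_def by (simp add: barp_comp barp_id)
        moreover have "barp N (sg s l) (fst (g x) (\<alpha> l)) = x (tail_pt s l)"
        proof -
          have "x (tail_pt s l) = barp N (sg s l \<noteq> sg s (\<alpha> l)) (x (head_pt s (\<alpha> l)))"
            using xt arrT[OF l] by fastforce
          also have "\<dots> = barp N (sg s l) (barp N (sg s (\<alpha> l)) (x (head_pt s (\<alpha> l))))"
            using xh(2) by (simp add: barp_comp)
          also have "\<dots> = barp N (sg s l) (fst (g x) (\<alpha> l))" using al unfolding g_def by simp
          finally show ?thesis by simp
        qed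
        ultimately show "xfun m (snd (g x)) (head_pt s l) = barp N (sg s l) (fst (g x) l) \<and>
                       xfun m (snd (g x)) (tail_pt s l) = barp N (sg s l) (fst (g x) (\<alpha> l))"
          using h1 h2 by simp
      qed
      then have "Cond N m \<alpha> s (fst (g x)) (snd (g x))" using Cond_iff[OF s] by blast
      moreover have "g x \<in> PiE {1..m} (\<lambda>_. {1..N}) \<times> PiE {1..m} (\<lambda>_. {1..N})"
        using i c by (simp add: mem_Times_iff)
      ultimately show "g x \<in> Pairs N m \<alpha> s" unfolding Pairs_def by blast
    qed
  qed
  then show ?thesis by (rule bij_betw_same_card)
qed



lemma card_Pairs_pow:
  assumes m: "1 \<le> m" and perm: "\<alpha> permutes {1..m}" and s: "s \<in> states m"
  shows "card (Pairs N m \<alpha> s) = N ^ f_state m \<alpha> s"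
proof -
  obtain \<tau> :: "nat \<times> bool \<Rightarrow> bool" where \<tau>: "\<forall>(a,b,p)\<in>Tri m \<alpha> s. a \<in> gverts m \<and> b \<in> gverts m \<and> ((\<tau> a \<noteq> \<tau> b) = p)"
    using tau_exists[OF m perm] by blast
  have GE: "gedges m \<alpha> s = (\<lambda>(a,b,p). (a,b)) ` Tri m \<alpha> s" by (rule gedges_Tri[OF m])
  have sub: "gedges m \<alpha> s \<subseteq> gverts m \<times> gverts m"
    unfolding GE using \<tau> by auto
  have fin: "finite (gverts m)" unfolding gverts_def by simp
  have "card (Pairs N m \<alpha> s) = card (Xs N m \<alpha> s)" by (rule card_Pairs[OF m perm s])
  also have "\<dots> = card {y\<in>PiE (gverts m) (\<lambda>_. {1..N}). \<forall>(a,b,p)\<in>Tri m \<alpha> s. y a = y b}"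
    unfolding Xs_def by (rule twist_card[OF \<tau>])
  also have "{y\<in>PiE (gverts m) (\<lambda>_. {1..N}). \<forall>(a,b,p)\<in>Tri m \<alpha> s. y a = y b}
      = {y\<in>PiE (gverts m) (\<lambda>_. {1..N}). \<forall>(a,b)\<in>gedges m \<alpha> s. y a = y b}"
    unfolding GE by auto
  also have "card \<dots> = card {1..N} ^ card (gverts m // ((gedges m \<alpha> s \<union> (gedges m \<alpha> s)\<inverse>)\<^sup>*))"
    by (rule count_classes[OF fin sub])
  finally show ?thesis unfolding f_state_def by simp
qed

theorem theorem12:
  fixes N m :: nat and \<alpha> :: "nat \<Rightarrow> nat"
  assumes "N \<ge> 1" and "m \<ge> 1" and "\<alpha> permutes {1..m}"
  shows "wSt_so N m \<alpha> =
    (\<Sum>s \<in> states m. of_int (state_sign m s) * (real N) powi (int (f_state m \<alpha> s) - 1))"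
proof -
  have N0: "real N \<noteq> 0" using assms(1) by simp
  have "wSt_so N m \<alpha> = (1 / real N) * (\<Sum>s\<in>states m. of_int (state_sign m s) * real (card (Pairs N m \<alpha> s)))"
    unfolding wSt_so_def using trace_exp[OF assms(2)] by simp
  also have "\<dots> = (\<Sum>s\<in>states m. of_int (state_sign m s) * (real N) powi (int (f_state m \<alpha> s) - 1))"
    unfolding sum_distrib_left
  proof (intro sum.cong refl)
    fix s assume s: "s \<in> states m"
    have "real N powi (int (f_state m \<alpha> s) - 1) = real N ^ f_state m \<alpha> s / real N"
      using N0 by (simp add: power_int_diff)
    then show "1 / real N * (of_int (state_sign m s) * real (card (Pairs N m \<alpha> s))) =
          of_int (state_sign m s) * real N powi (int (f_state m \<alpha> s) - 1)"
      using card_Pairs_pow[OF assms(2,3) s] by simp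
  qed
  finally show ?thesis .
qed


end
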